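(* Let $w$ be a graphon and $\kappa\in[0,1]$. Then: (1) $|K_{\kappa}(w)|=\lim_{n\to\infty}|K^{n}_{\kappa}(w)|$. (2) If $|K_{\kappa}(w)|>0$, then $|K_{\kappa}(w)|\ge\kappa$. (3) If $|K_{\kappa}(w)|=0$, then $K_{\kappa}(w)=\emptyset$; moreover in this case $K^{n}_{\kappa}(w)=\emptyset$ for some finite $n$. (4) The map $\kappa\mapsto|K_{\kappa}(w)|$ is upper semi-continuous; more precisely, for $\kappa\in(0,1]$, $|K_{\kappa}(w)|=\lim_{\kappa'\to\kappa,\,\kappa'<\kappa}|K_{\kappa'}(w)|=\limsup_{\kappa'\to\kappa}|K_{\kappa'}(w)|$.
   Context: A graphon is a Lebesgue-measurable symmetric function $w:[0,1]^2\to[0,1]$. For a measurable $K\subseteq[0,1]$ and $x\in[0,1]$ let $d_w^K(x)=\int_K w(x,y)\,\mathrm{d}y$ and $d_w(x)=d_w^{[0,1]}(x)$. For $\kappa\in[0,1]$ define recursively $K^{1}_{\kappa}(w)=\{x\in[0,1]: d_w(x)\ge\kappa\}$ and $K^{n+1}_{\kappa}(w)=\{x\in K^{n}_{\kappa}(w): d_w^{K^{n}_{\kappa}(w)}(x)\ge\kappa\}$, and let the $\kappa$-core be $K_{\kappa}(w)=\bigcap_{n\ge1}K^{n}_{\kappa}(w)$. $|A|$ denotes Lebesgue measure. *)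

theory Defs
  imports "HOL-Analysis.Analysis"
begin

text \<open>A graphon: Lebesgue-measurable symmetric function on the unit square with values in [0,1].
  Functions are total on real, only their values on the unit square matter.\<close>
definition graphon :: "(real \<Rightarrow> real \<Rightarrow> real) \<Rightarrow> bool" where
  "graphon w \<longleftrightarrow>
     (\<lambda>(x, y). w x y) \<in> borel_measurable (lebesgue_on ({0..1} \<times> {0..1})) \<and>
     (\<forall>x\<in>{0..1}. \<forall>y\<in>{0..1}. w x y = w y x \<and> 0 \<le> w x y \<and> w x y \<le> 1)"

definition gdeg :: "(real \<Rightarrow> real \<Rightarrow> real) \<Rightarrow> real set \<Rightarrow> real \<Rightarrow> real" where
  "gdeg w K x = (LINT y:K|lebesgue. w x y)"

text \<open>Iterated cores: kcore_iter w k n is K^n_k(w) for n \<ge> 1; index 0 is [0,1],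
  so that K^1 = {x in [0,1]. d_w(x) \<ge> k} with d_w = d_w^[0,1].\<close>
fun kcore_iter :: "(real \<Rightarrow> real \<Rightarrow> real) \<Rightarrow> real \<Rightarrow> nat \<Rightarrow> real set" where
  "kcore_iter w k 0 = {0..1}"
| "kcore_iter w k (Suc n) = {x \<in> kcore_iter w k n. gdeg w (kcore_iter w k n) x \<ge> k}"

definition kcore :: "(real \<Rightarrow> real \<Rightarrow> real) \<Rightarrow> real \<Rightarrow> real set" where
  "kcore w k = (\<Inter>n\<in>{1..}. kcore_iter w k n)"

end

theory Submission
  imports Defs
begin

lemma sigma_finite_lebesgue_real: "sigma_finite_measure (lebesgue :: real measure)"
proof
  show "\<exists>A. countable A \<and> A \<subseteq> sets (lebesgue::real measure) \<and> \<Union> A = space lebesgue \<and> (\<forall>a\<in>A. emeasure lebesgue a \<noteq> \<infinity>)"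
  proof (intro exI[of _ "range (\<lambda>n::nat. {- real n..real n})"] conjI)
    show "\<Union> (range (\<lambda>n::nat. {- real n..real n})) = space lebesgue"
    proof (auto)
      fix x :: real
      obtain n :: nat where "\<bar>x\<bar> \<le> n" using real_arch_simple by blast
      then show "\<exists>n::nat. - real n \<le> x \<and> x \<le> real n" by (intro exI[of _ n]) auto
    qed
  qed auto
qed

lemma sub_I_lmeasurable: "A \<in> sets lebesgue \<Longrightarrow> A \<subseteq> {0..1::real} \<Longrightarrow> A \<in> lmeasurable"
  by (rule bounded_set_imp_lmeasurable) (auto intro: bounded_subset[OF compact_imp_bounded[OF compact_Icc]])

lemma limsup_filter_mono:
  assumes "F \<le> G"
  shows "Limsup F f \<le> Limsup G (f :: _ \<Rightarrow> ereal)"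
  unfolding Limsup_def
  by (rule INF_mono) (use assms in \<open>auto simp: le_filter_def\<close>)

locale gsetup =
  fixes w :: "real \<Rightarrow> real \<Rightarrow> real" and g :: "real \<Rightarrow> real \<Rightarrow> real" and N :: "real set"
  assumes g_meas: "(\<lambda>(x,y). g x y) \<in> borel_measurable (lborel \<Otimes>\<^sub>M lborel)"
    and g_nn: "\<And>x y. 0 \<le> g x y" and g_le1: "\<And>x y. g x y \<le> 1"
    and w_bnd: "\<And>x y. x \<in> {0..1} \<Longrightarrow> y \<in> {0..1} \<Longrightarrow> 0 \<le> w x y \<and> w x y \<le> 1"
    and N_null: "N \<in> null_sets lebesgue"
    and good: "\<And>x. x \<in> {0..1} \<Longrightarrow> x \<notin> N \<Longrightarrow> AE y in lebesgue. y \<in> {0..1} \<longrightarrow> w x y = g x y"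
begin

definition h :: "real set \<Rightarrow> real \<Rightarrow> real" where
  "h A x = (\<integral>y. indicator A y * g x y \<partial>lebesgue)"

lemma g_meas2: "(\<lambda>(x,y). g x y) \<in> borel_measurable (lebesgue \<Otimes>\<^sub>M lebesgue)"
proof -
  have id: "(\<lambda>x. x) \<in> lebesgue \<rightarrow>\<^sub>M (lborel::real measure)"
    by (rule measurable_completion) simp
  have "(\<lambda>p::real\<times>real. (fst p, snd p)) \<in> (lebesgue \<Otimes>\<^sub>M lebesgue) \<rightarrow>\<^sub>M (lborel \<Otimes>\<^sub>M lborel)"
    by (intro measurable_Pair measurable_compose[OF measurable_fst id] measurable_compose[OF measurable_snd id])
  from measurable_compose[OF this g_meas] show ?thesis by (simp add: case_prod_beta)
qed

lemma gx_meas: "g x \<in> borel_measurable lebesgue"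
proof -
  have "(\<lambda>y. (\<lambda>(x,y). g x y) (x, y)) \<in> borel_measurable lborel"
    by (rule measurable_compose[OF measurable_Pair1' g_meas]) simp
  then show ?thesis by (intro measurable_completion) simp
qed

lemma h_meas:
  assumes A: "A \<in> sets lebesgue"
  shows "h A \<in> borel_measurable lebesgue"
proof -
  interpret L: sigma_finite_measure "lebesgue :: real measure" by (rule sigma_finite_lebesgue_real)
  have "(\<lambda>(x,y). indicator A y * g x y) \<in> borel_measurable (lebesgue \<Otimes>\<^sub>M lebesgue)"
  proof -
    have "(\<lambda>p::real\<times>real. indicator A (snd p) :: real) \<in> borel_measurable (lebesgue \<Otimes>\<^sub>M lebesgue)"
      using A by (intro measurable_compose[OF measurable_snd]) auto
    with g_meas2 show ?thesis unfolding case_prod_beta by (intro borel_measurable_times) auto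
  qed
  then show ?thesis unfolding h_def by (rule L.borel_measurable_lebesgue_integral)
qed

lemma ind_g_meas: "A \<in> sets lebesgue \<Longrightarrow> (\<lambda>y. indicator A y * g x y) \<in> borel_measurable lebesgue"
  using gx_meas[of x] by (intro borel_measurable_times) auto

lemma ind_g_int:
  assumes A: "A \<in> sets lebesgue" "A \<subseteq> {0..1}"
  shows "integrable lebesgue (\<lambda>y. indicator A y * g x y)"
proof (rule Bochner_Integration.integrable_bound[OF _ ind_g_meas[OF A(1)]])
  show "integrable lebesgue (indicator A :: real \<Rightarrow> real)"
    using sub_I_lmeasurable[OF A] lmeasurable_iff_integrable by blast
  show "AE y in lebesgue. norm (indicator A y * g x y) \<le> norm (indicator A y :: real)"
    using g_nn g_le1 by (auto simp: indicator_def abs_mult)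
qed

lemma h_nn: "0 \<le> h A x"
  unfolding h_def using g_nn by (intro integral_nonneg_AE) (auto simp: indicator_def)

lemma h_le:
  assumes A: "A \<in> sets lebesgue" "A \<subseteq> {0..1}"
  shows "h A x \<le> measure lebesgue A"
proof -
  have "h A x \<le> (\<integral>y. indicator A y \<partial>lebesgue)"
    unfolding h_def
  proof (rule integral_mono_AE[OF ind_g_int[OF A]])
    show "integrable lebesgue (indicator A :: real \<Rightarrow> real)"
      using sub_I_lmeasurable[OF A] lmeasurable_iff_integrable by blast
  qed (use g_le1 in \<open>auto simp: indicator_def\<close>)
  then show ?thesis by simp
qed

lemma gdeg_eq:
  assumes A: "A \<in> sets lebesgue" "A \<subseteq> {0..1}" and x: "x \<in> {0..1}" "x \<notin> N"
  shows "gdeg w A x = h A x"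
proof -
  have ae: "AE y in lebesgue. indicator A y * g x y = indicator A y * w x y"
    using good[OF x] by eventually_elim (use A in \<open>auto simp: indicator_def\<close>)
  have m: "(\<lambda>y. indicator A y * w x y) \<in> borel_measurable lebesgue"
    by (rule borel_measurable_AE[OF ind_g_meas[OF A(1)] ae])
  have "gdeg w A x = (\<integral>y. indicator A y * w x y \<partial>lebesgue)"
    unfolding gdeg_def set_lebesgue_integral_def by simp
  also have "\<dots> = h A x"
    unfolding h_def by (rule integral_cong_AE[OF m ind_g_meas[OF A(1)]]) (use ae in \<open>auto elim: AE_mp\<close>)
  finally show ?thesis .
qed

lemma gdeg_nn:
  assumes "A \<subseteq> {0..1}" "x \<in> {0..1}"
  shows "0 \<le> gdeg w A x"
  unfolding gdeg_def set_lebesgue_integral_def using assms w_bnd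
  by (intro integral_nonneg_AE AE_I2) (auto simp: indicator_def subset_iff)

lemma gdeg_le:
  assumes A: "A \<in> sets lebesgue" "A \<subseteq> {0..1}" and x: "x \<in> {0..1}"
  shows "gdeg w A x \<le> measure lebesgue A"
proof (cases "integrable lebesgue (\<lambda>y. indicator A y * w x y)")
  case True
  have "gdeg w A x \<le> (\<integral>y. indicator A y \<partial>lebesgue)"
    unfolding gdeg_def set_lebesgue_integral_def
  proof (simp only: real_scaleR_def, rule integral_mono_AE[OF True])
    show "integrable lebesgue (indicator A :: real \<Rightarrow> real)"
      using sub_I_lmeasurable[OF A] lmeasurable_iff_integrable by blast
    show "AE y in lebesgue. indicator A y * w x y \<le> indicator A y"
      using w_bnd x A by (intro AE_I2) (auto simp: indicator_def subset_iff)
  qed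
  then show ?thesis by simp
next
  case False
  then have "gdeg w A x = 0"
    unfolding gdeg_def set_lebesgue_integral_def by (simp add: not_integrable_integral_eq)
  then show ?thesis by simp
qed

lemma h_mono:
  assumes A: "A \<in> sets lebesgue" "A \<subseteq> {0..1}" and B: "B \<in> sets lebesgue" "B \<subseteq> {0..1}"
    and AB: "A - B \<in> null_sets lebesgue"
  shows "h A x \<le> h B x"
  unfolding h_def
proof (rule integral_mono_AE[OF ind_g_int[OF A] ind_g_int[OF B]])
  show "AE y in lebesgue. indicator A y * g x y \<le> indicator B y * g x y"
    using AE_not_in[OF AB] by eventually_elim (use g_nn in \<open>auto simp: indicator_def\<close>)
qed

lemma h_lim:
  assumes A: "\<And>m. A m \<in> sets lebesgue" "\<And>m. A m \<subseteq> {0..1}"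
    and B: "B \<in> sets lebesgue"
    and lim: "AE y in lebesgue. (\<lambda>m. indicator (A m) y :: real) \<longlonglongrightarrow> indicator B y"
  shows "(\<lambda>m. h (A m) x) \<longlonglongrightarrow> h B x"
  unfolding h_def
proof (rule integral_dominated_convergence[where w="indicator {0..1}"])
  show "integrable lebesgue (indicator {0..1::real} :: real \<Rightarrow> real)"
    using lmeasurable_iff_integrable by blast
  show "AE y in lebesgue. (\<lambda>m. indicator (A m) y * g x y) \<longlonglongrightarrow> indicator B y * g x y"
    using lim by eventually_elim (auto intro: tendsto_mult_right)
  show "AE y in lebesgue. norm (indicator (A m) y * g x y) \<le> indicator {0..1} y" for m
    using A(2)[of m] g_nn g_le1 by (intro AE_I2) (auto simp: indicator_def abs_mult subset_iff)
qed (use A B ind_g_meas in auto)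


lemma null_sub: "A \<subseteq> N \<Longrightarrow> A \<in> null_sets lebesgue"
  using N_null null_sets_completion_subset by blast

lemma Kn_sub: "kcore_iter w c n \<subseteq> {0..1}"
  by (induction n) auto

lemma Kn_dec: "kcore_iter w c (Suc n) \<subseteq> kcore_iter w c n"
  by auto

lemma Kn_decseq: "decseq (kcore_iter w c)"
  by (rule decseq_SucI) (rule Kn_dec)

lemma Kn_meas: "kcore_iter w c n \<in> sets lebesgue"
proof (induction n)
  case 0
  then show ?case by simp
next
  case (Suc n)
  define A where "A = kcore_iter w c n"
  have A: "A \<in> sets lebesgue" "A \<subseteq> {0..1}" using Suc Kn_sub A_def by auto
  have [measurable]: "h A \<in> borel_measurable lebesgue" by (rule h_meas[OF A(1)])
  have S: "{x \<in> space lebesgue. c \<le> h A x} \<in> sets lebesgue" by measurable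
  have eq: "kcore_iter w c (Suc n) = ((A \<inter> {x \<in> space lebesgue. c \<le> h A x}) - N) \<union> (kcore_iter w c (Suc n) \<inter> N)"
    using gdeg_eq[OF A] A(2) by (auto simp: A_def)
  have "kcore_iter w c (Suc n) \<inter> N \<in> sets lebesgue"
    using null_sub[of "kcore_iter w c (Suc n) \<inter> N"] by auto
  moreover have "(A \<inter> {x \<in> space lebesgue. c \<le> h A x}) - N \<in> sets lebesgue"
    using A(1) S N_null by auto
  ultimately show ?case by (subst eq) auto
qed

lemma Kn_fmeas: "kcore_iter w c n \<in> fmeasurable lebesgue"
  using sub_I_lmeasurable[OF Kn_meas Kn_sub] .

lemma kcore_eq: "kcore w c = (\<Inter>n. kcore_iter w c n)"
proof -
  have "kcore_iter w c 1 \<subseteq> kcore_iter w c 0" using Kn_dec[of c 0] by simp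
  show ?thesis unfolding kcore_def
  proof (rule antisym)
    show "(\<Inter>n\<in>{1..}. kcore_iter w c n) \<subseteq> (\<Inter>n. kcore_iter w c n)"
    proof
      fix x assume x: "x \<in> (\<Inter>n\<in>{1..}. kcore_iter w c n)"
      have "x \<in> kcore_iter w c n" for n
      proof (cases "n = 0")
        case True
        have "(1::nat) \<in> {1..}" by simp
        then show ?thesis using x \<open>kcore_iter w c 1 \<subseteq> kcore_iter w c 0\<close> True by blast
      next
        case False
        then show ?thesis using x by auto
      qed
      then show "x \<in> (\<Inter>n. kcore_iter w c n)" by blast
    qed
  qed auto
qed

lemma kcore_meas: "kcore w c \<in> sets lebesgue"
  unfolding kcore_eq using Kn_meas by auto

lemma kcore_sub: "kcore w c \<subseteq> {0..1}"
  unfolding kcore_eq using Kn_sub by blast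

lemma kcore_fmeas: "kcore w c \<in> fmeasurable lebesgue"
  using sub_I_lmeasurable[OF kcore_meas kcore_sub] .

lemma lim_Kn: "(\<lambda>n. measure lebesgue (kcore_iter w c n)) \<longlonglongrightarrow> measure lebesgue (kcore w c)"
  unfolding kcore_eq
proof (rule Lim_measure_decseq)
  show "range (kcore_iter w c) \<subseteq> sets lebesgue" using Kn_meas by auto
  show "decseq (kcore_iter w c)" by (rule Kn_decseq)
  fix i
  have "emeasure lebesgue (kcore_iter w c i) < \<infinity>"
    using Kn_fmeas[of c i] unfolding fmeasurable_def by blast
  then show "emeasure lebesgue (kcore_iter w c i) \<noteq> \<infinity>" by (rule less_imp_neq)
qed

lemma Kn_zero: "c \<le> 0 \<Longrightarrow> kcore_iter w c n = {0..1}"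
proof (induction n)
  case (Suc n)
  have "c \<le> gdeg w {0..1} x" if "x \<in> {0..1}" for x
    using gdeg_nn[of "{0..1}" x, OF order_refl that] Suc.prems by linarith
  then show ?case using Suc.IH[OF Suc.prems] by auto
qed simp

lemma kcore_zero: "c \<le> 0 \<Longrightarrow> kcore w c = {0..1}"
  unfolding kcore_eq using Kn_zero by auto

lemma core_ne_ge:
  assumes "x \<in> kcore w c"
  shows "c \<le> measure lebesgue (kcore w c)"
proof (rule LIMSEQ_le_const[OF lim_Kn], intro exI allI impI)
  fix n
  have "x \<in> kcore_iter w c (Suc n)" using assms unfolding kcore_eq by blast
  then have "c \<le> gdeg w (kcore_iter w c n) x" "x \<in> {0..1}" using Kn_sub[of c n] by auto
  with gdeg_le[OF Kn_meas[of c n] Kn_sub[of c n], of x] show "c \<le> measure lebesgue (kcore_iter w c n)" by linarith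
qed

lemma empty_after:
  assumes "measure lebesgue (kcore_iter w c n) < c"
  shows "kcore_iter w c (Suc n) = {}"
proof -
  have "\<not> c \<le> gdeg w (kcore_iter w c n) x" if "x \<in> kcore_iter w c n" for x
    using gdeg_le[OF Kn_meas[of c n] Kn_sub[of c n], of x] assms that Kn_sub[of c n] by force
  then show ?thesis by auto
qed

lemma mono_K:
  assumes "c1 \<le> c2"
  shows "kcore_iter w c2 n - N \<subseteq> kcore_iter w c1 n"
proof (induction n)
  case 0
  then show ?case by simp
next
  case (Suc n)
  show ?case
  proof
    fix x assume x: "x \<in> kcore_iter w c2 (Suc n) - N"
    then have x1: "x \<in> kcore_iter w c1 n" "x \<in> {0..1}" "x \<notin> N" using Suc Kn_sub[of c2 n] by auto
    have "c2 \<le> gdeg w (kcore_iter w c2 n) x" using x by auto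
    also have "\<dots> = h (kcore_iter w c2 n) x" using gdeg_eq[OF Kn_meas Kn_sub x1(2,3)] .
    also have "\<dots> \<le> h (kcore_iter w c1 n) x"
      by (rule h_mono[OF Kn_meas Kn_sub Kn_meas Kn_sub]) (rule null_sub, use Suc in blast)
    also have "\<dots> = gdeg w (kcore_iter w c1 n) x" using gdeg_eq[OF Kn_meas Kn_sub x1(2,3)] by simp
    finally show "x \<in> kcore_iter w c1 (Suc n)" using x1 assms by auto
  qed
qed

lemma mono_core: "c1 \<le> c2 \<Longrightarrow> kcore w c2 - N \<subseteq> kcore w c1"
  unfolding kcore_eq using mono_K by blast

lemma phi_mono:
  assumes "c1 \<le> c2"
  shows "measure lebesgue (kcore w c2) \<le> measure lebesgue (kcore w c1)"
proof -
  have "measure lebesgue (kcore w c2) = measure lebesgue (kcore w c2 - N)"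
    using measure_Diff_null_set[OF kcore_meas N_null] by simp
  also have "\<dots> \<le> measure lebesgue (kcore w c1)"
    by (rule measure_mono_fmeasurable[OF mono_core[OF assms]]) (use kcore_meas N_null kcore_fmeas in auto)
  finally show ?thesis .
qed

lemma core_deg:
  assumes x: "x \<in> kcore w c" "x \<notin> N"
  shows "c \<le> h (kcore w c) x"
proof -
  have xI: "x \<in> {0..1}" using x kcore_sub[of c] by auto
  have lim: "(\<lambda>n. h (kcore_iter w c n) x) \<longlonglongrightarrow> h (kcore w c) x"
    by (rule h_lim[OF Kn_meas Kn_sub kcore_meas])
       (unfold kcore_eq, rule AE_I2, rule LIMSEQ_indicator_decseq[OF Kn_decseq])
  show ?thesis
  proof (rule LIMSEQ_le_const[OF lim], intro exI allI impI)
    fix n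
    have "x \<in> kcore_iter w c (Suc n)" using x unfolding kcore_eq by blast
    then have "c \<le> gdeg w (kcore_iter w c n) x" by auto
    then show "c \<le> h (kcore_iter w c n) x" using gdeg_eq[OF Kn_meas Kn_sub xI x(2)] by simp
  qed
qed

lemma sub_core:
  assumes L: "L \<in> sets lebesgue" "L \<subseteq> {0..1}" and deg: "\<And>x. x \<in> L \<Longrightarrow> x \<notin> N \<Longrightarrow> c \<le> h L x"
  shows "measure lebesgue L \<le> measure lebesgue (kcore w c)"
proof -
  have sub: "L - N \<subseteq> kcore_iter w c n" for n
  proof (induction n)
    case 0
    then show ?case using L by auto
  next
    case (Suc n)
    show ?case
    proof
      fix x assume x: "x \<in> L - N"
      then have x1: "x \<in> kcore_iter w c n" "x \<in> {0..1}" "x \<notin> N" using Suc L by auto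
      have "c \<le> h L x" using deg x by auto
      also have "\<dots> \<le> h (kcore_iter w c n) x"
        by (rule h_mono[OF L Kn_meas Kn_sub]) (rule null_sub, use Suc in blast)
      also have "\<dots> = gdeg w (kcore_iter w c n) x" using gdeg_eq[OF Kn_meas Kn_sub x1(2,3)] by simp
      finally show "x \<in> kcore_iter w c (Suc n)" using x1 by auto
    qed
  qed
  then have "L - N \<subseteq> kcore w c" unfolding kcore_eq by blast
  then have "measure lebesgue (L - N) \<le> measure lebesgue (kcore w c)"
    by (rule measure_mono_fmeasurable) (use L N_null kcore_fmeas in auto)
  then show ?thesis using measure_Diff_null_set[OF L(1) N_null] by simp
qed


lemma left_eps:
  assumes e: "e > 0"
  shows "\<exists>b<\<kappa>. \<forall>k. b < k \<and> k < \<kappa> \<longrightarrow> measure lebesgue (kcore w k) < measure lebesgue (kcore w \<kappa>) + e"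
proof -
  define \<phi> where "\<phi> k = measure lebesgue (kcore w k)" for k
  define km where "km m = \<kappa> - inverse (real (Suc m))" for m
  have km_lt: "km m < \<kappa>" for m unfolding km_def by simp
  have km_mono: "km m \<le> km (Suc m)" for m
    unfolding km_def by (simp add: field_simps)
  have km_lim: "km \<longlonglongrightarrow> \<kappa>"
    unfolding km_def using tendsto_diff[OF tendsto_const[of \<kappa>] LIMSEQ_inverse_real_of_nat] by simp
  define A where "A m = kcore w (km m) - N" for m
  have A_meas: "A m \<in> sets lebesgue" for m unfolding A_def using kcore_meas N_null by auto
  have A_sub: "A m \<subseteq> {0..1}" for m unfolding A_def using kcore_sub by auto
  have A_dec: "decseq A"
  proof (rule decseq_SucI)
    fix m show "A (Suc m) \<subseteq> A m" unfolding A_def using mono_core[OF km_mono[of m]] by auto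
  qed
  have A_meas_eq: "measure lebesgue (A m) = \<phi> (km m)" for m
    unfolding A_def \<phi>_def using measure_Diff_null_set[OF kcore_meas N_null] by simp
  define L where "L = (\<Inter>m. A m)"
  have L_meas: "L \<in> sets lebesgue" unfolding L_def using A_meas by auto
  have L_sub: "L \<subseteq> {0..1}" unfolding L_def using A_sub by auto
  have limA: "(\<lambda>m. measure lebesgue (A m)) \<longlonglongrightarrow> measure lebesgue L"
    unfolding L_def
  proof (rule Lim_measure_decseq)
    show "range A \<subseteq> sets lebesgue" using A_meas by auto
    show "decseq A" by (rule A_dec)
    fix i
    have "emeasure lebesgue (A i) < \<infinity>"
      using sub_I_lmeasurable[OF A_meas A_sub, of i] unfolding fmeasurable_def by blast
    then show "emeasure lebesgue (A i) \<noteq> \<infinity>" by (rule less_imp_neq)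
  qed
  have deg: "\<kappa> \<le> h L x" if x: "x \<in> L" "x \<notin> N" for x
  proof -
    have hl: "(\<lambda>m. h (A m) x) \<longlonglongrightarrow> h L x"
      unfolding L_def
      by (rule h_lim[OF A_meas A_sub]) (use A_meas in auto, rule AE_I2, rule LIMSEQ_indicator_decseq[OF A_dec])
    have "km m \<le> h (A m) x" for m
    proof -
      have e1: "h (A m) x \<le> h (kcore w (km m)) x"
        by (rule h_mono[OF A_meas A_sub kcore_meas kcore_sub]) (rule null_sub, auto simp: A_def)
      have e2: "h (kcore w (km m)) x \<le> h (A m) x"
        by (rule h_mono[OF kcore_meas kcore_sub A_meas A_sub]) (rule null_sub, auto simp: A_def)
      have "x \<in> kcore w (km m)" using x unfolding L_def A_def by auto
      then have "km m \<le> h (kcore w (km m)) x" using core_deg x(2) by blast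
      then show ?thesis using e1 e2 by linarith
    qed
    then show ?thesis by (intro LIMSEQ_le[OF km_lim hl]) auto
  qed
  have L_le: "measure lebesgue L \<le> \<phi> \<kappa>"
    unfolding \<phi>_def by (rule sub_core[OF L_meas L_sub deg])
  have ge: "\<phi> \<kappa> \<le> measure lebesgue (A m)" for m
    unfolding A_meas_eq \<phi>_def by (rule phi_mono) (use km_lt[of m] in simp)
  have "\<phi> \<kappa> \<le> measure lebesgue L"
    by (rule LIMSEQ_le_const[OF limA]) (use ge in auto)
  with L_le have "measure lebesgue L = \<phi> \<kappa>" by simp
  with limA have lim: "(\<lambda>m. \<phi> (km m)) \<longlonglongrightarrow> \<phi> \<kappa>" unfolding A_meas_eq by simp
  have "eventually (\<lambda>m. \<phi> (km m) < \<phi> \<kappa> + e) sequentially"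
    by (rule order_tendstoD(2)[OF lim]) (use e in simp)
  then obtain m where m: "\<phi> (km m) < \<phi> \<kappa> + e" unfolding eventually_sequentially by blast
  show ?thesis
  proof (intro exI[of _ "km m"] conjI allI impI)
    show "km m < \<kappa>" by (rule km_lt)
    fix k assume k: "km m < k \<and> k < \<kappa>"
    have "\<phi> k \<le> \<phi> (km m)" unfolding \<phi>_def by (rule phi_mono) (use k in simp)
    with m show "measure lebesgue (kcore w k) < measure lebesgue (kcore w \<kappa>) + e"
      unfolding \<phi>_def by simp
  qed
qed

lemma left_cont:
  "((\<lambda>k. measure lebesgue (kcore w k)) \<longlongrightarrow> measure lebesgue (kcore w \<kappa>)) (at_left \<kappa>)"
proof (rule order_tendstoI)
  fix a assume a: "a < measure lebesgue (kcore w \<kappa>)"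
  show "eventually (\<lambda>k. a < measure lebesgue (kcore w k)) (at_left \<kappa>)"
  proof -
    have ev: "eventually (\<lambda>k. k \<in> {\<kappa> - 1<..<\<kappa>}) (at_left \<kappa>)"
      by (rule eventually_at_left_real) simp
    show ?thesis using ev
  proof (rule eventually_mono)
    fix k assume "k \<in> {\<kappa> - 1<..<\<kappa>}"
    then have "measure lebesgue (kcore w \<kappa>) \<le> measure lebesgue (kcore w k)" by (intro phi_mono) auto
    with a show "a < measure lebesgue (kcore w k)" by simp
  qed
  qed
next
  fix a assume a: "measure lebesgue (kcore w \<kappa>) < a"
  obtain b where b: "b < \<kappa>" "\<And>k. b < k \<and> k < \<kappa> \<Longrightarrow> measure lebesgue (kcore w k) < measure lebesgue (kcore w \<kappa>) + (a - measure lebesgue (kcore w \<kappa>))"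
    using left_eps[of "a - measure lebesgue (kcore w \<kappa>)" \<kappa>] a by auto
  show "eventually (\<lambda>k. measure lebesgue (kcore w k) < a) (at_left \<kappa>)"
    using eventually_at_left_real[OF b(1)]
    by (rule eventually_mono) (use b(2) in force)
qed

lemma limsup_le:
  "Limsup (at \<kappa> within S) (\<lambda>k. ereal (measure lebesgue (kcore w k))) \<le> ereal (measure lebesgue (kcore w \<kappa>))"
proof (rule ereal_le_epsilon2)
  fix e :: real assume e: "0 < e"
  obtain b where b: "b < \<kappa>" "\<And>k. b < k \<and> k < \<kappa> \<Longrightarrow> measure lebesgue (kcore w k) < measure lebesgue (kcore w \<kappa>) + e"
    using left_eps[OF e, of \<kappa>] by auto
  have ev: "eventually (\<lambda>k. k \<in> {b<..}) (nhds \<kappa>)"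
    by (rule eventually_nhds_in_open) (use b in auto)
  have "eventually (\<lambda>k. ereal (measure lebesgue (kcore w k)) \<le> ereal (measure lebesgue (kcore w \<kappa>)) + ereal e) (at \<kappa> within S)"
    unfolding eventually_at_filter
  proof (rule eventually_mono[OF ev], intro impI)
    fix k assume k: "k \<in> {b<..}"
    have "measure lebesgue (kcore w k) \<le> measure lebesgue (kcore w \<kappa>) + e"
    proof (cases "k < \<kappa>")
      case True
      then show ?thesis using b(2)[of k] k by force
    next
      case False
      then have "measure lebesgue (kcore w k) \<le> measure lebesgue (kcore w \<kappa>)" by (intro phi_mono) simp
      then show ?thesis using e by simp
    qed
    then show "ereal (measure lebesgue (kcore w k)) \<le> ereal (measure lebesgue (kcore w \<kappa>)) + ereal e" by simp
  qed
  then show "Limsup (at \<kappa> within S) (\<lambda>k. ereal (measure lebesgue (kcore w k))) \<le> ereal (measure lebesgue (kcore w \<kappa>)) + ereal e"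
    by (rule Limsup_bounded)
qed

lemma limsup_ge:
  assumes k: "0 < \<kappa>" "\<kappa> \<le> 1"
  shows "ereal (measure lebesgue (kcore w \<kappa>)) \<le> Limsup (at \<kappa> within {0..1}) (\<lambda>k. ereal (measure lebesgue (kcore w k)))"
proof -
  have "Limsup (at_left \<kappa>) (\<lambda>k. ereal (measure lebesgue (kcore w k))) = ereal (measure lebesgue (kcore w \<kappa>))"
  proof (rule lim_imp_Limsup)
    show "((\<lambda>k. ereal (measure lebesgue (kcore w k))) \<longlongrightarrow> ereal (measure lebesgue (kcore w \<kappa>))) (at_left \<kappa>)"
      by (rule tendsto_ereal[OF left_cont])
  qed simp
  moreover have "at_left \<kappa> \<le> at \<kappa> within {0..1}"
    unfolding le_filter_def
  proof (intro allI impI)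
    fix P assume "eventually P (at \<kappa> within {0..1})"
    then obtain d where d: "d > 0" "\<And>x. x \<in> {0..1} \<Longrightarrow> x \<noteq> \<kappa> \<and> dist x \<kappa> < d \<Longrightarrow> P x"
      unfolding eventually_at by blast
    have "max 0 (\<kappa> - d) < \<kappa>" using d k by simp
    from eventually_at_left_real[OF this]
    show "eventually P (at_left \<kappa>)"
      by (rule eventually_mono) (use d k in \<open>auto simp: dist_real_def\<close>)
  qed
  ultimately show ?thesis using limsup_filter_mono by metis
qed

end

lemma setup_exists:
  assumes "graphon w"
  shows "\<exists>g N. gsetup w g N"
proof -
  let ?I = "{0..1::real}"
  define f where "f = (\<lambda>p::real\<times>real. indicator (?I \<times> ?I) p * w (fst p) (snd p))"
  have IIb: "?I \<times> ?I \<in> sets lborel" by (simp add: borel_closed closed_Times)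
  then have II: "?I \<times> ?I \<in> sets lebesgue" by (rule sets_completionI_sets)
  have fm: "f \<in> borel_measurable lebesgue"
  proof -
    have "(\<lambda>(x,y). w x y) \<in> borel_measurable (restrict_space lebesgue (?I \<times> ?I))"
      using assms unfolding graphon_def by blast
    then have "(\<lambda>p. indicator (?I \<times> ?I) p *\<^sub>R (\<lambda>(x,y). w x y) p) \<in> borel_measurable lebesgue"
      using borel_measurable_restrict_space_iff[of "?I \<times> ?I" lebesgue "\<lambda>(x,y). w x y"] II by simp
    then show ?thesis unfolding f_def by (simp add: case_prod_beta)
  qed
  obtain g' where g': "g' \<in> borel_measurable lborel" "AE p in lborel. f p = g' p"
    using completion_ex_borel_measurable_real[OF fm] by blast
  define g where "g x y = indicator (?I \<times> ?I) (x,y) * max 0 (min 1 (g' (x,y)))" for x y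
  have gm: "(\<lambda>(x,y). g x y) \<in> borel_measurable (lborel \<Otimes>\<^sub>M lborel)"
  proof -
    have "(\<lambda>p. indicator (?I \<times> ?I) p * max 0 (min 1 (g' p))) \<in> borel_measurable (lborel :: (real \<times> real) measure)"
      using g'(1) IIb by measurable
    moreover have "(\<lambda>(x,y). g x y) = (\<lambda>p. indicator (?I \<times> ?I) p * max 0 (min 1 (g' p)))"
      by (auto simp: g_def fun_eq_iff)
    ultimately show ?thesis unfolding lborel_prod by simp
  qed
  have wb: "\<And>x y. x \<in> ?I \<Longrightarrow> y \<in> ?I \<Longrightarrow> 0 \<le> w x y \<and> w x y \<le> 1"
    using assms unfolding graphon_def by blast
  have fg: "AE p in lborel. f p = g (fst p) (snd p)"
    using g'(2)
  proof (rule eventually_mono)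
    fix p :: "real \<times> real" assume p: "f p = g' p"
    show "f p = g (fst p) (snd p)"
    proof (cases "p \<in> ?I \<times> ?I")
      case True
      then have "f p = w (fst p) (snd p)" unfolding f_def by simp
      moreover have "0 \<le> w (fst p) (snd p) \<and> w (fst p) (snd p) \<le> 1" using wb True by (cases p) auto
      ultimately show ?thesis using p True unfolding g_def by (simp add: case_prod_beta)
    next
      case False
      then show ?thesis unfolding f_def g_def by simp
    qed
  qed
  then have "AE p in lborel \<Otimes>\<^sub>M lborel. f p = g (fst p) (snd p)" unfolding lborel_prod .
  then have "AE x in lborel. AE y in lborel. f (x, y) = g x y"
    using lborel_pair.AE_pair by fastforce
  then have "AE x in lebesgue. AE y in lebesgue. f (x, y) = g x y"
    by (rule AE_completion[OF eventually_mono]) (rule AE_completion)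
  then obtain N where N: "N \<in> null_sets lebesgue"
    "{x \<in> space lebesgue. \<not> (AE y in lebesgue. f (x, y) = g x y)} \<subseteq> N"
    unfolding eventually_ae_filter by blast
  have "gsetup w g N"
  proof
    show "(\<lambda>(x,y). g x y) \<in> borel_measurable (lborel \<Otimes>\<^sub>M lborel)" by (rule gm)
    show "0 \<le> g x y" for x y unfolding g_def by (simp add: indicator_def)
    show "g x y \<le> 1" for x y unfolding g_def by (simp add: indicator_def)
    show "x \<in> ?I \<Longrightarrow> y \<in> ?I \<Longrightarrow> 0 \<le> w x y \<and> w x y \<le> 1" for x y by (rule wb)
    show "N \<in> null_sets lebesgue" by (rule N(1))
    fix x assume x: "x \<in> ?I" "x \<notin> N"
    then have "AE y in lebesgue. f (x, y) = g x y" using N(2) by auto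
    then show "AE y in lebesgue. y \<in> ?I \<longrightarrow> w x y = g x y"
      by (rule eventually_mono) (use x in \<open>auto simp: f_def\<close>)
  qed
  then show ?thesis by blast
qed

theorem lemma2:
  fixes w :: "real \<Rightarrow> real \<Rightarrow> real" and \<kappa> :: real
  assumes "graphon w" and "\<kappa> \<in> {0..1}"
  shows "((\<lambda>n. measure lebesgue (kcore_iter w \<kappa> n)) \<longlonglongrightarrow> measure lebesgue (kcore w \<kappa>))
    \<and> (measure lebesgue (kcore w \<kappa>) > 0 \<longrightarrow> measure lebesgue (kcore w \<kappa>) \<ge> \<kappa>)
    \<and> (measure lebesgue (kcore w \<kappa>) = 0 \<longrightarrow>
           kcore w \<kappa> = {} \<and> (\<exists>n\<ge>1. kcore_iter w \<kappa> n = {}))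
    \<and> (Limsup (at \<kappa> within {0..1}) (\<lambda>k. ereal (measure lebesgue (kcore w k)))
           \<le> ereal (measure lebesgue (kcore w \<kappa>)))
    \<and> (\<kappa> > 0 \<longrightarrow>
           ((\<lambda>k. measure lebesgue (kcore w k)) \<longlongrightarrow> measure lebesgue (kcore w \<kappa>)) (at_left \<kappa>) \<and>
           Limsup (at \<kappa> within {0..1}) (\<lambda>k. ereal (measure lebesgue (kcore w k)))
             = ereal (measure lebesgue (kcore w \<kappa>)))"
proof -
  obtain g N where "gsetup w g N" using setup_exists[OF assms(1)] by blast
  interpret gsetup w g N by fact
  have k: "0 \<le> \<kappa>" "\<kappa> \<le> 1" using assms(2) by auto
  have P2: "measure lebesgue (kcore w \<kappa>) > 0 \<longrightarrow> measure lebesgue (kcore w \<kappa>) \<ge> \<kappa>"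
  proof
    assume "measure lebesgue (kcore w \<kappa>) > 0"
    then obtain x where "x \<in> kcore w \<kappa>" by (cases "kcore w \<kappa> = {}") auto
    then show "measure lebesgue (kcore w \<kappa>) \<ge> \<kappa>" by (rule core_ne_ge)
  qed
  have P3: "measure lebesgue (kcore w \<kappa>) = 0 \<longrightarrow> kcore w \<kappa> = {} \<and> (\<exists>n\<ge>1. kcore_iter w \<kappa> n = {})"
  proof
    assume m0: "measure lebesgue (kcore w \<kappa>) = 0"
    have kpos: "0 < \<kappa>"
    proof (rule ccontr)
      assume "\<not> 0 < \<kappa>"
      then have "kcore w \<kappa> = {0..1}" using kcore_zero by simp
      with m0 show False by simp
    qed
    have ne: "kcore w \<kappa> = {}"
    proof (rule ccontr)
      assume "kcore w \<kappa> \<noteq> {}"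
      then obtain x where "x \<in> kcore w \<kappa>" by blast
      from core_ne_ge[OF this] m0 kpos show False by simp
    qed
    have "eventually (\<lambda>n. measure lebesgue (kcore_iter w \<kappa> n) < \<kappa>) sequentially"
      by (rule order_tendstoD(2)[OF lim_Kn]) (use m0 kpos in simp)
    then obtain n where "measure lebesgue (kcore_iter w \<kappa> n) < \<kappa>" unfolding eventually_sequentially by blast
    then have "kcore_iter w \<kappa> (Suc n) = {}" by (rule empty_after)
    then show "kcore w \<kappa> = {} \<and> (\<exists>n\<ge>1. kcore_iter w \<kappa> n = {})" using ne by (intro conjI exI[of _ "Suc n"]) auto
  qed
  show ?thesis
    using lim_Kn P2 P3 limsup_le limsup_ge[of \<kappa>] left_cont k by (auto intro: antisym)
qed

end
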